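(* Let $X$ be a connected, locally path connected space and $H\le\pi_1(X,x_0)$. If $X$ is homotopically Hausdorff relative to $H$, then $H$ is a closed subgroup of $\pi_1^{wh}(X,x_0)$.
   Context: $\pi_1^{wh}(X,x_0)$ is $\pi_1(X,x_0)$ with the whisker topology, having as basis the sets $[\alpha]\,i_*\pi_1(U,x_0)$ for $[\alpha]\in\pi_1(X,x_0)$ and $U$ an open neighborhood of $x_0$. $X$ is homotopically Hausdorff relative to $H$ if for every $g\in\pi_1(X,x_0)\setminus H$ and every path $\alpha$ from $x_0$ there is an open neighborhood $U$ of $\alpha(1)$ such that no loop $\gamma:(I,\partial I)\to(U,\alpha(1))$ satisfies $[\alpha*\gamma*\alpha^{-1}]\in Hg$. *)

theory Defs
  imports "HOL-Analysis.Analysis" "HOL-Algebra.Coset"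
begin

text \<open>The space X is a subset S of a topological type, with the subspace topology.\<close>

definition loop_at :: "'a::topological_space set \<Rightarrow> 'a \<Rightarrow> (real \<Rightarrow> 'a) \<Rightarrow> bool" where
  "loop_at S x0 g \<longleftrightarrow> path g \<and> path_image g \<subseteq> S \<and> pathstart g = x0 \<and> pathfinish g = x0"

definition path_class :: "'a::topological_space set \<Rightarrow> (real \<Rightarrow> 'a) \<Rightarrow> (real \<Rightarrow> 'a) set" where
  "path_class S g = {h. homotopic_paths S g h}"

definition fundamental_group ::
  "'a::topological_space set \<Rightarrow> 'a \<Rightarrow> ((real \<Rightarrow> 'a) set) monoid" where
  "fundamental_group S x0 =
     \<lparr> carrier = {path_class S g | g. loop_at S x0 g},
       mult = (\<lambda>A B. {h. \<exists>a\<in>A. \<exists>b\<in>B. homotopic_paths S (a +++ b) h}),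
       one = path_class S (\<lambda>_. x0) \<rparr>"

definition incl_image :: "'a::topological_space set \<Rightarrow> 'a set \<Rightarrow> 'a \<Rightarrow> (real \<Rightarrow> 'a) set set" where
  "incl_image S U x0 = {path_class S g | g. loop_at U x0 g}"

definition whisker_topology :: "'a::topological_space set \<Rightarrow> 'a \<Rightarrow> (real \<Rightarrow> 'a) set topology" where
  "whisker_topology S x0 =
     topology_generated_by
       {{a \<otimes>\<^bsub>fundamental_group S x0\<^esub> k | k. k \<in> incl_image S U x0}
        | a U. a \<in> carrier (fundamental_group S x0) \<and> openin (top_of_set S) U \<and> x0 \<in> U}"

definition homotopically_hausdorff_rel ::
  "'a::topological_space set \<Rightarrow> 'a \<Rightarrow> (real \<Rightarrow> 'a) set set \<Rightarrow> bool" where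
  "homotopically_hausdorff_rel S x0 H \<longleftrightarrow>
     (\<forall>g \<in> carrier (fundamental_group S x0) - H.
       \<forall>\<alpha>. path \<alpha> \<and> path_image \<alpha> \<subseteq> S \<and> pathstart \<alpha> = x0 \<longrightarrow>
         (\<exists>U. openin (top_of_set S) U \<and> pathfinish \<alpha> \<in> U \<and>
            \<not> (\<exists>\<gamma>. loop_at U (pathfinish \<alpha>) \<gamma> \<and>
                  path_class S (\<alpha> +++ \<gamma> +++ reversepath \<alpha>)
                    \<in> H #>\<^bsub>fundamental_group S x0\<^esub> g)))"

end

theory Submission imports Defs begin

lemma hp_rid_c:
  fixes p :: "real \<Rightarrow> 'a::topological_space"
  assumes "path p" "path_image p \<subseteq> S"
  shows "homotopic_paths S (p +++ (\<lambda>_. pathfinish p)) p"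
proof -
  have \<section>: "continuous_on {0..1} (\<lambda>t::real. if t \<le> 1/2 then 2 *\<^sub>R t else 1)"
    unfolding split_01
    by (rule continuous_on_cases continuous_intros | force simp: pathfinish_def joinpaths_def)+
  show ?thesis
    apply (rule homotopic_paths_sym)
    using assms unfolding pathfinish_def joinpaths_def
    by (intro \<section> continuous_on_cases continuous_intros homotopic_paths_reparametrize [where f = "\<lambda>t. if t \<le> 1/2 then 2 *\<^sub>R t else 1"]; force)
qed

lemma hp_lid_c:
  fixes p :: "real \<Rightarrow> 'a::topological_space"
  assumes "path p" "path_image p \<subseteq> S"
  shows "homotopic_paths S ((\<lambda>_. pathstart p) +++ p) p"
proof -
  have "homotopic_paths S (reversepath p +++ (\<lambda>_. pathfinish (reversepath p))) (reversepath p)"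
    using assms by (intro hp_rid_c) auto
  then have "homotopic_paths S (reversepath (reversepath p +++ (\<lambda>_. pathfinish (reversepath p)))) (reversepath (reversepath p))"
    by (rule homotopic_paths_reversepath_D)
  moreover have "reversepath (reversepath p +++ (\<lambda>_. pathfinish (reversepath p))) = (\<lambda>_. pathstart p) +++ p"
    by (subst reversepath_joinpaths) (auto simp: reversepath_def pathstart_def pathfinish_def)
  ultimately show ?thesis by simp
qed

lemma hp_rinv_c:
  fixes p :: "real \<Rightarrow> 'a::topological_space"
  assumes "path p" "path_image p \<subseteq> S"
    shows "homotopic_paths S (p +++ reversepath p) (\<lambda>_. pathstart p)"
proof -
  have p: "continuous_on {0..1} p" 
    using assms by (auto simp: path_def)
  let ?A = "{0..1} \<times> {0..1}"
  have "continuous_on ?A (\<lambda>x. ((\<lambda>t. p (fst x * t)) +++ reversepath ((\<lambda>t. p (fst x * t)))) (snd x))"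
    unfolding joinpaths_def reversepath_def path_def
  proof (rule continuous_on_cases_le)
    show "continuous_on {x \<in> ?A. snd x \<le> 1/2} (\<lambda>t. p (fst t * (2 * snd t)))"
         "continuous_on {x \<in> ?A. 1/2 \<le> snd x} (\<lambda>t. p (fst t * (1 - (2 * snd t - 1))))"
         "continuous_on ?A snd"
      by (intro continuous_on_compose2 [OF p] continuous_intros; auto simp: mult_le_one)+
  qed (auto simp: algebra_simps)
  then show ?thesis
    using assms
    apply (subst homotopic_paths_sym_eq)
    unfolding homotopic_paths_def homotopic_with_def
    apply (rule_tac x="(\<lambda>y. ((\<lambda>t. p (fst y * t)) +++ reversepath((\<lambda>t. p (fst y * t)))) (snd y))" in exI)
    apply (force simp: mult_le_one path_defs joinpaths_def reversepath_def)
    done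
qed


lemma cls_eq:
  assumes "homotopic_paths S p q"
  shows "path_class S p = path_class S q"
  using assms unfolding path_class_def
  by (auto intro: homotopic_paths_trans homotopic_paths_sym)

lemma cls_mult:
  assumes "loop_at S x0 p" "loop_at S x0 q"
  shows "path_class S p \<otimes>\<^bsub>fundamental_group S x0\<^esub> path_class S q = path_class S (p +++ q)"
proof -
  have hp: "homotopic_paths S p p" "homotopic_paths S q q" and fs: "pathfinish p = pathstart q"
    using assms by (auto simp: loop_at_def)
  have "homotopic_paths S (p +++ q) h"
    if "homotopic_paths S p a" "homotopic_paths S q b" "homotopic_paths S (a +++ b) h" for a b h
    by (rule homotopic_paths_trans[OF homotopic_paths_join[OF that(1,2) fs] that(3)])
  moreover have "\<exists>a. homotopic_paths S p a \<and> (\<exists>b. homotopic_paths S q b \<and> homotopic_paths S (a +++ b) h)"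
    if "homotopic_paths S (p +++ q) h" for h
    using hp that by blast
  ultimately show ?thesis
    unfolding fundamental_group_def path_class_def by auto
qed

lemma loop_join:
  "loop_at S x0 p \<Longrightarrow> loop_at S x0 q \<Longrightarrow> loop_at S x0 (p +++ q)"
  by (auto simp: loop_at_def path_image_join)

lemma loop_rev:
  "loop_at S x0 p \<Longrightarrow> loop_at S x0 (reversepath p)"
  by (auto simp: loop_at_def)

lemma loop_const:
  "x0 \<in> S \<Longrightarrow> loop_at S x0 (\<lambda>_. x0)"
  by (auto simp: loop_at_def path_def path_image_def pathstart_def pathfinish_def)

lemma carrier_fg: "carrier (fundamental_group S x0) = {path_class S g | g. loop_at S x0 g}"
  by (simp add: fundamental_group_def)

lemma one_fg: "\<one>\<^bsub>fundamental_group S x0\<^esub> = path_class S (\<lambda>_. x0)"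
  by (simp add: fundamental_group_def)

lemma fg_group:
  assumes "x0 \<in> S"
  shows "group (fundamental_group S x0)"
proof (rule groupI)
  let ?G = "fundamental_group S x0"
  show "x \<otimes>\<^bsub>?G\<^esub> y \<in> carrier ?G" if "x \<in> carrier ?G" "y \<in> carrier ?G" for x y
    using that unfolding carrier_fg by (auto simp: cls_mult intro!: loop_join)
  show "\<one>\<^bsub>?G\<^esub> \<in> carrier ?G"
    unfolding carrier_fg one_fg using loop_const[OF assms] by blast
  show "x \<otimes>\<^bsub>?G\<^esub> y \<otimes>\<^bsub>?G\<^esub> z = x \<otimes>\<^bsub>?G\<^esub> (y \<otimes>\<^bsub>?G\<^esub> z)"
    if xyz: "x \<in> carrier ?G" "y \<in> carrier ?G" "z \<in> carrier ?G" for x y z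
  proof -
    obtain p where p: "loop_at S x0 p" "x = path_class S p"
      using xyz(1) unfolding carrier_fg by blast
    obtain q where q: "loop_at S x0 q" "y = path_class S q"
      using xyz(2) unfolding carrier_fg by blast
    obtain r where r: "loop_at S x0 r" "z = path_class S r"
      using xyz(3) unfolding carrier_fg by blast
    have 1: "x \<otimes>\<^bsub>?G\<^esub> y \<otimes>\<^bsub>?G\<^esub> z = path_class S ((p +++ q) +++ r)"
      using p q r by (simp add: cls_mult loop_join)
    have 2: "x \<otimes>\<^bsub>?G\<^esub> (y \<otimes>\<^bsub>?G\<^esub> z) = path_class S (p +++ (q +++ r))"
      using p q r by (simp add: cls_mult loop_join)
    have "homotopic_paths S (p +++ (q +++ r)) ((p +++ q) +++ r)"
      using p q r by (intro homotopic_paths_assoc) (auto simp: loop_at_def)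
    then show ?thesis unfolding 1 2 by (rule cls_eq[OF homotopic_paths_sym])
  qed
  show "\<one>\<^bsub>?G\<^esub> \<otimes>\<^bsub>?G\<^esub> x = x" if xc: "x \<in> carrier ?G" for x
  proof -
    obtain p where p: "loop_at S x0 p" "x = path_class S p"
      using xc unfolding carrier_fg by blast
    have "\<one>\<^bsub>?G\<^esub> \<otimes>\<^bsub>?G\<^esub> x = path_class S ((\<lambda>_. x0) +++ p)"
      using p loop_const[OF assms] by (simp add: one_fg cls_mult)
    also have "\<dots> = x"
      unfolding p(2) using hp_lid_c[of p S] p(1) by (intro cls_eq) (auto simp: loop_at_def)
    finally show ?thesis .
  qed
  show "\<exists>y\<in>carrier ?G. y \<otimes>\<^bsub>?G\<^esub> x = \<one>\<^bsub>?G\<^esub>" if xc: "x \<in> carrier ?G" for x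
  proof -
    obtain p where p: "loop_at S x0 p" "x = path_class S p"
      using xc unfolding carrier_fg by blast
    have "path_class S (reversepath p) \<otimes>\<^bsub>?G\<^esub> x = path_class S (reversepath p +++ p)"
      using p loop_rev[OF p(1)] by (simp add: cls_mult)
    also have "\<dots> = \<one>\<^bsub>?G\<^esub>"
      unfolding one_fg using hp_rinv_c[of "reversepath p" S] p(1) by (intro cls_eq) (auto simp: loop_at_def)
    finally have "path_class S (reversepath p) \<otimes>\<^bsub>?G\<^esub> x = \<one>\<^bsub>?G\<^esub>" .
    moreover have "path_class S (reversepath p) \<in> carrier ?G"
      using loop_rev[OF p(1)] unfolding carrier_fg by blast
    ultimately show ?thesis by blast
  qed
qed


theorem proposition3p9:
  fixes S :: "'a::topological_space set" and x0 :: 'a and H :: "(real \<Rightarrow> 'a) set set"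
  assumes "x0 \<in> S"
    and "connected S"
    and "locally path_connected S"
    and "subgroup H (fundamental_group S x0)"
    and "homotopically_hausdorff_rel S x0 H"
  shows "closedin (whisker_topology S x0) H"
proof -
  let ?G = "fundamental_group S x0"
  define \<B> where "\<B> = {{a \<otimes>\<^bsub>?G\<^esub> k | k. k \<in> incl_image S U x0}
        | a U. a \<in> carrier ?G \<and> openin (top_of_set S) U \<and> x0 \<in> U}"
  have W: "whisker_topology S x0 = topology_generated_by \<B>"
    unfolding whisker_topology_def \<B>_def ..
  interpret G: group ?G using fg_group[OF assms(1)] .
  interpret H: subgroup H ?G by (rule assms(4))
  have incl_sub: "incl_image S U x0 \<subseteq> carrier ?G" if "U \<subseteq> S" for U
    using that unfolding incl_image_def carrier_fg loop_at_def by blast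
  have one_incl: "\<one>\<^bsub>?G\<^esub> \<in> incl_image S U x0" if "x0 \<in> U" for U
    using loop_const[OF that] unfolding incl_image_def one_fg by blast
  have basis_open: "openin (whisker_topology S x0) {a \<otimes>\<^bsub>?G\<^esub> k | k. k \<in> incl_image S U x0}"
    if "a \<in> carrier ?G" "openin (top_of_set S) U" "x0 \<in> U" for a U
    unfolding W openin_topology_generated_by_iff
    by (rule generate_topology_on.Basis) (use that in \<open>auto simp: \<B>_def\<close>)
  have top: "topspace (whisker_topology S x0) = carrier ?G"
  proof
    show "topspace (whisker_topology S x0) \<subseteq> carrier ?G"
    proof
      fix x assume "x \<in> topspace (whisker_topology S x0)"
      then obtain a U k where "a \<in> carrier ?G" "openin (top_of_set S) U" "k \<in> incl_image S U x0"
        "x = a \<otimes>\<^bsub>?G\<^esub> k"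
        unfolding W topology_generated_by_topspace \<B>_def by blast
      moreover have "U \<subseteq> S" using \<open>openin (top_of_set S) U\<close> by (rule openin_imp_subset)
      ultimately show "x \<in> carrier ?G" using incl_sub by blast
    qed
    show "carrier ?G \<subseteq> topspace (whisker_topology S x0)"
    proof
      fix x assume x: "x \<in> carrier ?G"
      have "x \<in> {x \<otimes>\<^bsub>?G\<^esub> k | k. k \<in> incl_image S S x0}"
        using one_incl[OF assms(1)] x by force
      then show "x \<in> topspace (whisker_topology S x0)"
        using basis_open[OF x openin_subtopology_self assms(1)] openin_subset by blast
    qed
  qed
  show ?thesis
    unfolding closedin_def top
  proof
    show "H \<subseteq> carrier ?G" by (rule H.subset)
    show "openin (whisker_topology S x0) (carrier ?G - H)"
    proof (subst openin_subopen, intro ballI)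
      fix g assume g: "g \<in> carrier ?G - H"
      define \<alpha> where "\<alpha> = (\<lambda>_::real. x0)"
      have la: "loop_at S x0 \<alpha>" unfolding \<alpha>_def by (rule loop_const[OF assms(1)])
      then have "path \<alpha> \<and> path_image \<alpha> \<subseteq> S \<and> pathstart \<alpha> = x0" by (auto simp: loop_at_def)
      then obtain U where U: "openin (top_of_set S) U" "pathfinish \<alpha> \<in> U"
        and noU: "\<not> (\<exists>\<gamma>. loop_at U (pathfinish \<alpha>) \<gamma> \<and>
                  path_class S (\<alpha> +++ \<gamma> +++ reversepath \<alpha>) \<in> H #>\<^bsub>?G\<^esub> g)"
        using assms(5) g unfolding homotopically_hausdorff_rel_def by blast
      have pf: "pathfinish \<alpha> = x0" by (simp add: \<alpha>_def pathfinish_def)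
      have US: "U \<subseteq> S" using U(1) by (rule openin_imp_subset)
      have x0U: "x0 \<in> U" using U(2) pf by simp
      let ?V = "{g \<otimes>\<^bsub>?G\<^esub> k | k. k \<in> incl_image S U x0}"
      have "openin (whisker_topology S x0) ?V"
        using basis_open[OF _ U(1) x0U] g by blast
      moreover have "g \<in> ?V"
        using one_incl[OF x0U] g by force
      moreover have "?V \<subseteq> carrier ?G - H"
      proof
        fix v assume "v \<in> ?V"
        then obtain k where k: "k \<in> incl_image S U x0" "v = g \<otimes>\<^bsub>?G\<^esub> k" by blast
        obtain \<gamma> where \<gamma>: "loop_at U x0 \<gamma>" "k = path_class S \<gamma>"
          using k(1) unfolding incl_image_def by blast
        have \<gamma>S: "loop_at S x0 \<gamma>" using \<gamma>(1) US unfolding loop_at_def by blast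
        have kc: "k \<in> carrier ?G" using incl_sub[OF US] k(1) by blast
        have gc: "g \<in> carrier ?G" using g by blast
        have vc: "v \<in> carrier ?G" using k kc gc by simp
        have "v \<notin> H"
        proof
          assume vH: "v \<in> H"
          have rS: "loop_at S x0 (reversepath \<gamma>)" by (rule loop_rev[OF \<gamma>S])
          have rU: "loop_at U x0 (reversepath \<gamma>)" by (rule loop_rev[OF \<gamma>(1)])
          have invk: "inv\<^bsub>?G\<^esub> k = path_class S (reversepath \<gamma>)"
          proof (rule G.inv_equality)
            have "path_class S (reversepath \<gamma>) \<otimes>\<^bsub>?G\<^esub> k = path_class S (reversepath \<gamma> +++ \<gamma>)"
              using rS \<gamma>S \<gamma>(2) by (simp add: cls_mult)
            also have "\<dots> = \<one>\<^bsub>?G\<^esub>"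
              unfolding one_fg using hp_rinv_c[of "reversepath \<gamma>" S] \<gamma>S by (intro cls_eq) (auto simp: loop_at_def)
            finally show "path_class S (reversepath \<gamma>) \<otimes>\<^bsub>?G\<^esub> k = \<one>\<^bsub>?G\<^esub>" .
            show "k \<in> carrier ?G" by (rule kc)
            show "path_class S (reversepath \<gamma>) \<in> carrier ?G"
              using rS unfolding carrier_fg by blast
          qed
          have "inv\<^bsub>?G\<^esub> v \<otimes>\<^bsub>?G\<^esub> g = inv\<^bsub>?G\<^esub> k"
            using k(2) kc gc by (simp add: G.inv_mult_group G.m_assoc)
          moreover have "inv\<^bsub>?G\<^esub> v \<otimes>\<^bsub>?G\<^esub> g \<in> H #>\<^bsub>?G\<^esub> g"
            using H.m_inv_closed[OF vH] unfolding r_coset_def by blast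
          moreover have "path_class S (\<alpha> +++ reversepath \<gamma> +++ reversepath \<alpha>) = path_class S (reversepath \<gamma>)"
          proof -
            have ra: "reversepath \<alpha> = (\<lambda>_. pathfinish (reversepath \<gamma>))"
              using rS by (auto simp: \<alpha>_def reversepath_def loop_at_def)
            have a: "\<alpha> = (\<lambda>_. pathstart (reversepath \<gamma> +++ reversepath \<alpha>))"
              using rS by (auto simp: \<alpha>_def loop_at_def)
            have h1: "homotopic_paths S (reversepath \<gamma> +++ reversepath \<alpha>) (reversepath \<gamma>)"
              unfolding ra by (rule hp_rid_c) (use rS in \<open>auto simp: loop_at_def\<close>)
            have h2: "homotopic_paths S (\<alpha> +++ (reversepath \<gamma> +++ reversepath \<alpha>)) (reversepath \<gamma> +++ reversepath \<alpha>)"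
              apply (subst a, rule hp_lid_c)
              using h1 homotopic_paths_imp_path homotopic_paths_imp_subset by blast+
            show ?thesis by (rule cls_eq, rule homotopic_paths_trans[OF h2 h1])
          qed
          ultimately have "path_class S (\<alpha> +++ reversepath \<gamma> +++ reversepath \<alpha>) \<in> H #>\<^bsub>?G\<^esub> g"
            using invk by simp
          then show False using noU rU pf by auto
        qed
        then show "v \<in> carrier ?G - H" using vc by blast
      qed
      ultimately show "\<exists>T. openin (whisker_topology S x0) T \<and> g \<in> T \<and> T \<subseteq> carrier ?G - H"
        by blast
    qed
  qed
qed

end
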